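(* Let $(X,d)$ be a metric space, $f:X\to X$ a Borel measurable map and $\mu$ an $f$-invariant (i.e. $\mu=\mu\circ f^{-1}$) Borel probability measure that is an expansive measure of $f$. Then for every $p\in X$, $\mu(W^s(p))=0$, where $W^s(p)=\{x\in X:\lim_{n\to\infty}d(f^n(x),f^n(p))=0\}$.
   Context: A Borel probability measure $\mu$ is an expansive measure of $f$ if there is $\delta>0$ with $\mu(\Phi_\delta(x))=0$ for all $x\in X$, where $\Phi_\delta(x)=\{y\in X: d(f^i(y),f^i(x))\le\delta \text{ for all } i\in\mathbb{N}\}$, $\mathbb{N}=\{0,1,2,\dots\}$. *)

theory Defs
  imports "HOL-Probability.Probability"
begin

definition dyn_ball :: "('a::metric_space \<Rightarrow> 'a) \<Rightarrow> real \<Rightarrow> 'a \<Rightarrow> 'a set" where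
  "dyn_ball f \<delta> x = {y. \<forall>i::nat. dist ((f ^^ i) y) ((f ^^ i) x) \<le> \<delta>}"

definition expansive_measure :: "'a measure \<Rightarrow> ('a::metric_space \<Rightarrow> 'a) \<Rightarrow> bool" where
  "expansive_measure M f \<longleftrightarrow> (\<exists>\<delta>>0. \<forall>x. emeasure M (dyn_ball f \<delta> x) = 0)"

definition stable_set :: "('a::metric_space \<Rightarrow> 'a) \<Rightarrow> 'a \<Rightarrow> 'a set" where
  "stable_set f p = {x. (\<lambda>n. dist ((f ^^ n) x) ((f ^^ n) p)) \<longlonglongrightarrow> 0}"

end

theory Submission
  imports Defs
begin

lemma funpow_meas:
  fixes f :: "'a::topological_space \<Rightarrow> 'a"
  assumes "f \<in> borel_measurable borel"
  shows "(f ^^ n) \<in> borel_measurable (borel :: 'a::topological_space measure)"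
proof (induction n)
  case 0 have "f ^^ 0 = (\<lambda>x. x)" by (rule ext) simp
  then show ?case by simp
next
  case (Suc n)
  have "(f ^^ Suc n) = f \<circ> (f ^^ n)" by simp
  then show ?case using Suc assms by (metis measurable_comp)
qed

lemma dyn_ball_meas:
  assumes "f \<in> borel_measurable borel"
  shows "dyn_ball f d x \<in> sets (borel :: 'a::metric_space measure)"
proof -
  have "dyn_ball f d x = (\<Inter>i. (\<lambda>y. dist ((f ^^ i) y) ((f ^^ i) x)) -` {..d})"
    unfolding dyn_ball_def by auto
  moreover have "\<And>i. (\<lambda>y. dist ((f ^^ i) y) ((f ^^ i) x)) -` {..d} \<in> sets borel"
  proof -
    fix i
    have "(\<lambda>y. dist ((f ^^ i) y) ((f ^^ i) x)) \<in> borel_measurable borel"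
    proof -
      have c: "(\<lambda>y. dist y ((f ^^ i) x)) \<in> borel_measurable borel"
        by (intro borel_measurable_continuous_onI continuous_intros)
      have "(\<lambda>y. dist ((f ^^ i) y) ((f ^^ i) x)) = (\<lambda>y. dist y ((f ^^ i) x)) \<circ> (f ^^ i)"
        by auto
      then show ?thesis using measurable_comp[OF funpow_meas[OF assms, of i] c] by simp
    qed
    then show "(\<lambda>y. dist ((f ^^ i) y) ((f ^^ i) x)) -` {..d} \<in> sets borel"
      using measurable_sets[of _ borel borel "{..d}"] by simp
  qed
  ultimately show ?thesis by auto
qed

theorem proposition3p2:
  fixes M :: "'a::metric_space measure" and f :: "'a \<Rightarrow> 'a"
  assumes "prob_space M"
    and "sets M = sets borel"
    and "f \<in> borel_measurable borel"
    and "distr M M f = M"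
    and "expansive_measure M f"
  shows "\<forall>p. emeasure M (stable_set f p) = 0"
proof
  fix p
  obtain d where d: "d > 0" "\<And>x. emeasure M (dyn_ball f d x) = 0"
    using assms(5) unfolding expansive_measure_def by blast
  have sp: "space M = UNIV" using sets_eq_imp_space_eq[OF assms(2)] by simp
  have fM: "f \<in> measurable M M"
    using assms(3) measurable_cong_sets[OF assms(2) assms(2)] by simp
  have fnM: "(f ^^ n) \<in> measurable M M" for n
    using funpow_meas[OF assms(3), of n] measurable_cong_sets[OF assms(2) assms(2)] by simp
  have inv: "distr M M (f ^^ n) = M" for n
  proof (induction n)
    case 0 then show ?case by (simp add: distr_id2 sp)
  next
    case (Suc n)
    have "distr M M (f ^^ Suc n) = distr M M (f \<circ> (f ^^ n))" by simp
    also have "\<dots> = distr (distr M M (f ^^ n)) M f"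
      using distr_distr[OF fM fnM[of n]] by simp
    also have "\<dots> = M" using Suc assms(4) by simp
    finally show ?case .
  qed
  define A where "A N = (f ^^ N) -` dyn_ball f d ((f ^^ N) p)" for N
  have Ameas: "A N \<in> sets M" for N
  proof -
    have "dyn_ball f d ((f ^^ N) p) \<in> sets M"
      using dyn_ball_meas[OF assms(3)] assms(2) by simp
    then show ?thesis using measurable_sets[OF fnM[of N]] sp unfolding A_def by simp
  qed
  have A0: "emeasure M (A N) = 0" for N
  proof -
    have "dyn_ball f d ((f ^^ N) p) \<in> sets M"
      using dyn_ball_meas[OF assms(3)] assms(2) by simp
    then have "emeasure (distr M M (f ^^ N)) (dyn_ball f d ((f ^^ N) p)) = emeasure M (A N)"
      using emeasure_distr[OF fnM[of N]] sp unfolding A_def by simp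
    then show ?thesis using inv[of N] d(2) by simp
  qed
  have sub: "stable_set f p \<subseteq> (\<Union>N. A N)"
  proof
    fix x assume "x \<in> stable_set f p"
    then have "(\<lambda>n. dist ((f ^^ n) x) ((f ^^ n) p)) \<longlonglongrightarrow> 0"
      unfolding stable_set_def by simp
    then have "eventually (\<lambda>n. dist ((f ^^ n) x) ((f ^^ n) p) < d) sequentially"
      using d(1) by (simp add: order_tendstoD(2))
    then obtain N where N: "\<And>n. n \<ge> N \<Longrightarrow> dist ((f ^^ n) x) ((f ^^ n) p) < d"
      unfolding eventually_sequentially by blast
    have "x \<in> A N" unfolding A_def dyn_ball_def
    proof (simp, intro allI)
      fix i
      have "dist ((f ^^ (i + N)) x) ((f ^^ (i + N)) p) < d" using N by simp
      then show "dist ((f ^^ i) ((f ^^ N) x)) ((f ^^ i) ((f ^^ N) p)) \<le> d"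
        by (simp add: funpow_add)
    qed
    then show "x \<in> (\<Union>N. A N)" by blast
  qed
  have U: "(\<Union>N. A N) \<in> null_sets M"
    using Ameas A0 by (intro null_sets_UN) auto
  show "emeasure M (stable_set f p) = 0"
  proof (cases "stable_set f p \<in> sets M")
    case True
    then show ?thesis using sub U
      by (metis null_sets_subset null_setsD1)
  next
    case False
    then show ?thesis by (simp add: emeasure_notin_sets)
  qed
qed

end
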